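(* Let $(\gamma_i)_{i=0}^n$ be a linear sequence of geodesics in $\mathbb{H}^2$, and let $(x_i)_{i=0}^n$ be a homologous sequence of points on the $\gamma_i$. Then for every $y \in \gamma_n$, $$d(x_n, y) \le d(x_0, y).$$
   Context: A linear sequence of geodesics in $\mathbb{H}^2$ is a sequence $(\gamma_i)_{i=0}^n$ of pairwise disjoint geodesics, consecutive ones having a common orthogonal, such that each $\gamma_i$ separates those before it from those after it. Each $\gamma_i$ is oriented so that the geodesics following it in the sequence lie to its left ($\mathbb{H}^2$ being oriented). Let $\eta_i$ be the common orthogonal of $\gamma_i$ and $\gamma_{i+1}$. A homologous sequence of points is a sequence $x_i\in\gamma_i$ such that for each $i$, the signed distance (along $\gamma_{i+1}$, with its orientation) from the foot of $\eta_i$ on $\gamma_{i+1}$ to $x_{i+1}$ equals the signed distance (along $\gamma_i$, with its orientation) from the foot of $\eta_i$ on $\gamma_i$ to $x_i$; equivalently $x_{i+1}$ is the image of $x_i$ under the orientation-preserving isometry taking the oriented geodesic $\gamma_i$ to $\gamma_{i+1}$ and the foot of $\eta_i$ on $\gamma_i$ to its foot on $\gamma_{i+1}$. *)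

theory Defs
  imports "HOL-Analysis.Analysis"
begin

text \<open>Hyperboloid model of the hyperbolic plane inside real^3 with the
Minkowski form x1 y1 + x2 y2 - x3 y3.\<close>

definition mink :: "real^3 \<Rightarrow> real^3 \<Rightarrow> real" where
  "mink x y = x$1 * y$1 + x$2 * y$2 - x$3 * y$3"

definition hyp_pt :: "real^3 \<Rightarrow> bool" where
  "hyp_pt x \<longleftrightarrow> mink x x = -1 \<and> x$3 > 0"

definition hdist :: "real^3 \<Rightarrow> real^3 \<Rightarrow> real" where
  "hdist x y = arcosh (- mink x y)"

text \<open>The oriented geodesic is its image, oriented in the direction of increasing parameter;
the signed distance from c s to c t along it is t - s.\<close>
definition geod_line :: "(real \<Rightarrow> real^3) \<Rightarrow> bool" where
  "geod_line c \<longleftrightarrow> (\<forall>t. hyp_pt (c t)) \<and> (\<forall>s t. hdist (c s) (c t) = \<bar>s - t\<bar>)"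

text \<open>Ambient determinant det(p,q,x) (scalar triple product).  The hyperbolic plane is
oriented by declaring a tangent basis (u,v) at p positive iff det(p,u,v) > 0.\<close>
definition det3 :: "real^3 \<Rightarrow> real^3 \<Rightarrow> real^3 \<Rightarrow> real" where
  "det3 p q x = p$1 * (q$2 * x$3 - q$3 * x$2) - p$2 * (q$1 * x$3 - q$3 * x$1)
               + p$3 * (q$1 * x$2 - q$2 * x$1)"

definition left_of :: "(real \<Rightarrow> real^3) \<Rightarrow> real^3 \<Rightarrow> bool" where
  "left_of c x \<longleftrightarrow> hyp_pt x \<and> det3 (c 0) (c 1) x > 0"

definition right_of :: "(real \<Rightarrow> real^3) \<Rightarrow> real^3 \<Rightarrow> bool" where
  "right_of c x \<longleftrightarrow> hyp_pt x \<and> det3 (c 0) (c 1) x < 0"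

definition meets_orth :: "(real \<Rightarrow> real^3) \<Rightarrow> real \<Rightarrow> (real \<Rightarrow> real^3) \<Rightarrow> bool" where
  "meets_orth c s e \<longleftrightarrow> (\<exists>t. e t = c s \<and>
      mink (vector_derivative c (at s)) (vector_derivative e (at t)) = 0)"

definition separates :: "(real^3) set \<Rightarrow> (real^3) set \<Rightarrow> (real^3) set \<Rightarrow> bool" where
  "separates A B C \<longleftrightarrow> (\<forall>P. path P \<and> path_image P \<subseteq> Collect hyp_pt \<and>
      pathstart P \<in> B \<and> pathfinish P \<in> C \<longrightarrow> path_image P \<inter> A \<noteq> {})"

end

theory Submission
  imports Defs
begin

lemma mink_sym: "mink x y = mink y x" by (simp add: mink_def algebra_simps)
lemma mink_add_left: "mink (x + y) z = mink x z + mink y z" by (simp add: mink_def algebra_simps)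
lemma mink_add_right: "mink z (x + y) = mink z x + mink z y" by (simp add: mink_def algebra_simps)
lemma mink_diff_left: "mink (x - y) z = mink x z - mink y z" by (simp add: mink_def algebra_simps)
lemma mink_diff_right: "mink z (x - y) = mink z x - mink z y" by (simp add: mink_def algebra_simps)
lemma mink_scaleR_left: "mink (r *\<^sub>R x) z = r * mink x z" by (simp add: mink_def algebra_simps)
lemma mink_scaleR_right: "mink z (r *\<^sub>R x) = r * mink z x" by (simp add: mink_def algebra_simps)
lemmas mink_lin = mink_add_left mink_add_right mink_diff_left mink_diff_right mink_scaleR_left mink_scaleR_right

lemma gram:
  "det3 a b c * det3 d e f =
   - (mink a d * (mink b e * mink c f - mink b f * mink c e)
    - mink a e * (mink b d * mink c f - mink b f * mink c d)
    + mink a f * (mink b d * mink c e - mink b e * mink c d))"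
  unfolding det3_def mink_def by (simp add: algebra_simps)

lemma hyp_ge:
  assumes "hyp_pt x" "hyp_pt y" shows "mink x y \<le> -1"
proof -
  define p where "p = x$1*y$1 + x$2*y$2"
  define A where "A = x$1^2 + x$2^2"
  define B where "B = y$1^2 + y$2^2"
  have x3: "(x$3)^2 = 1 + A" "x$3 > 0" using assms(1) unfolding hyp_pt_def mink_def A_def
    by (auto simp: power2_eq_square)
  have y3: "(y$3)^2 = 1 + B" "y$3 > 0" using assms(2) unfolding hyp_pt_def mink_def B_def
    by (auto simp: power2_eq_square)
  have AB: "A + B \<ge> 2*p"
  proof -
    have "A + B - 2*p = (x$1-y$1)^2 + (x$2-y$2)^2" unfolding A_def B_def p_def by (simp add: power2_eq_square algebra_simps)
    then show ?thesis by (smt (verit) zero_le_power2)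
  qed
  have AB2: "A * B \<ge> p^2"
  proof -
    have "A * B - p^2 = (x$1*y$2-x$2*y$1)^2" unfolding A_def B_def p_def by (simp add: power2_eq_square algebra_simps)
    then show ?thesis by (smt (verit) zero_le_power2)
  qed
  have sq: "(x$3*y$3)^2 \<ge> (1+p)^2"
  proof -
    have "(x$3*y$3)^2 = (1+A)*(1+B)" using x3 y3 by (simp add: power_mult_distrib)
    also have "\<dots> = 1 + (A + B) + A*B" by (simp add: algebra_simps)
    finally show ?thesis using AB AB2 by (simp add: power2_eq_square algebra_simps)
  qed
  have "x$3*y$3 \<ge> 1 + p"
  proof (cases "1 + p \<le> 0")
    case True
    have "x$3*y$3 > 0" using x3 y3 by simp
    then show ?thesis using True by linarith
  next
    case False
    have "x$3*y$3 \<ge> 0" using x3 y3 by simp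
    then show ?thesis by (rule power2_le_imp_le[OF sq])
  qed
  then show ?thesis unfolding mink_def p_def by simp
qed

lemma null_zero:
  assumes "mink v v = 0" "mink v p = 0" "hyp_pt p" shows "v = 0"
proof -
  have p3: "(p$3)^2 = 1 + p$1^2 + p$2^2" using assms(3) unfolding hyp_pt_def mink_def
    by (auto simp: power2_eq_square)
  have v3: "(v$3)^2 = v$1^2 + v$2^2" using assms(1) unfolding mink_def by (simp add: power2_eq_square)
  have vp: "v$3*p$3 = v$1*p$1 + v$2*p$2" using assms(2) unfolding mink_def by simp
  have "(v$1*p$1 + v$2*p$2)^2 = (v$3*p$3)^2" using vp by simp
  also have "\<dots> = (v$3)^2 * (p$3)^2" by (simp add: power_mult_distrib)
  also have "\<dots> = (v$1^2 + v$2^2) + (v$1^2 + v$2^2)*(p$1^2 + p$2^2)" unfolding v3 p3 by (simp add: algebra_simps)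
  finally have e1: "(v$1*p$1 + v$2*p$2)^2 = (v$1^2 + v$2^2) + (v$1^2 + v$2^2)*(p$1^2 + p$2^2)" .
  have e2: "(v$1^2 + v$2^2)*(p$1^2 + p$2^2) - (v$1*p$1 + v$2*p$2)^2 = (v$1*p$2 - v$2*p$1)^2"
    by (simp add: power2_eq_square algebra_simps)
  have "(v$1*p$2 - v$2*p$1)^2 \<ge> 0" by simp
  then have le: "v$1^2 + v$2^2 \<le> 0" using e1 e2 by linarith
  have "v$1^2 \<ge> 0" "v$2^2 \<ge> 0" by simp_all
  then have "v$1^2 = 0" "v$2^2 = 0" using le by linarith+
  then have "v$1 = 0" "v$2 = 0" by simp_all
  moreover then have "v$3 = 0" using v3 by simp
  ultimately show ?thesis by (simp add: vec_eq_iff forall_3)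
qed


lemma rep_deriv:
  assumes "\<And>t. f t = cosh (t - a) *\<^sub>R P + sinh (t - a) *\<^sub>R U"
  shows "vector_derivative f (at s) = sinh (s - a) *\<^sub>R P + cosh (s - a) *\<^sub>R U"
proof -
  have f: "f = (\<lambda>t. cosh (t - a) *\<^sub>R P + sinh (t - a) *\<^sub>R U)" using assms by auto
  have "((\<lambda>t. cosh (t - a) *\<^sub>R P + sinh (t - a) *\<^sub>R U) has_vector_derivative
        (sinh (s - a) *\<^sub>R P + cosh (s - a) *\<^sub>R U)) (at s)"
    by (auto intro!: derivative_eq_intros)
  then show ?thesis unfolding f by (rule vector_derivative_at)
qed

lemma geod_mink:
  assumes "geod_line c" shows "mink (c s) (c t) = - cosh (s - t)"
proof -
  have h: "hyp_pt (c s)" "hyp_pt (c t)" using assms unfolding geod_line_def by auto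
  have "arcosh (- mink (c s) (c t)) = \<bar>s - t\<bar>" using assms unfolding geod_line_def hdist_def by auto
  moreover have "- mink (c s) (c t) \<ge> 1" using hyp_ge[OF h] by simp
  ultimately have "- mink (c s) (c t) = cosh \<bar>s - t\<bar>" by (metis cosh_arcosh_real)
  moreover have "cosh \<bar>s - t\<bar> = cosh (s - t)" by (simp add: abs_if)
  ultimately show ?thesis by simp
qed

lemma geod_rep:
  assumes g: "geod_line c"
  shows "\<exists>U. mink U U = 1 \<and> mink (c a) U = 0 \<and> (\<forall>t. c t = cosh (t - a) *\<^sub>R c a + sinh (t - a) *\<^sub>R U)"
proof -
  define P where "P = c a"
  define R where "R = c (a + 1)"
  define sh where "sh = sinh (1::real)"
  define ch where "ch = cosh (1::real)"
  have shp: "sh > 0" unfolding sh_def by simp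
  have chsh: "ch^2 = sh^2 + 1" unfolding sh_def ch_def by (rule cosh_square_eq)
  define U where "U = (1 / sh) *\<^sub>R (R - ch *\<^sub>R P)"
  have PP: "mink P P = -1" unfolding P_def using geod_mink[OF g, of a a] by simp
  have RR: "mink R R = -1" unfolding R_def using geod_mink[OF g, of "a+1" "a+1"] by simp
  have PR: "mink P R = - ch" "mink R P = - ch" unfolding P_def R_def ch_def
    using geod_mink[OF g, of a "a+1"] geod_mink[OF g, of "a+1" a] by simp_all
  have UU: "mink U U = 1"
  proof -
    have "mink U U = (1/sh)^2 * (mink R R - 2 * ch * mink P R + ch^2 * mink P P)"
      unfolding U_def by (simp add: mink_lin PR power2_eq_square algebra_simps)
    also have "\<dots> = (1/sh)^2 * (ch^2 - 1)" by (simp add: RR PR PP algebra_simps power2_eq_square)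
    also have "\<dots> = 1" using chsh shp by (simp add: power2_eq_square field_simps)
    finally show ?thesis .
  qed
  have PU: "mink P U = 0" unfolding U_def by (simp add: mink_lin PR PP)
  have rep: "c t = cosh (t - a) *\<^sub>R P + sinh (t - a) *\<^sub>R U" for t
  proof -
    define C where "C = cosh (t - a)"
    define S where "S = sinh (t - a)"
    have CS: "C^2 = S^2 + 1" unfolding C_def S_def by (rule cosh_square_eq)
    have tt: "mink (c t) (c t) = -1" using geod_mink[OF g, of t t] by simp
    have tP: "mink (c t) P = - C" "mink P (c t) = - C" unfolding P_def C_def
      using geod_mink[OF g, of t a] geod_mink[OF g, of a t] by simp_all
    have "mink (c t) R = - cosh ((t - a) - 1)" unfolding R_def
      using geod_mink[OF g, of t "a+1"] by (simp add: algebra_simps)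
    then have tR: "mink (c t) R = - (C * ch - S * sh)" unfolding C_def S_def ch_def sh_def
      by (simp add: cosh_diff)
    have tU: "mink (c t) U = S" "mink U (c t) = S"
    proof -
      have "mink (c t) U = (1/sh) * (mink (c t) R - ch * mink (c t) P)"
        unfolding U_def by (simp add: mink_lin)
      also have "\<dots> = S" using shp by (simp add: tR tP field_simps)
      finally show "mink (c t) U = S" .
      then show "mink U (c t) = S" by (simp add: mink_sym)
    qed
    define v where "v = c t - C *\<^sub>R P - S *\<^sub>R U"
    have UP: "mink U P = 0" using PU by (simp add: mink_sym)
    have vP: "mink v P = 0" unfolding v_def by (simp add: mink_lin tP PP UP)
    have "mink v v = -1 + C^2 - S^2"
      unfolding v_def by (simp add: mink_lin tt tP tU PP UP PU UU power2_eq_square algebra_simps)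
    then have vv: "mink v v = 0" using CS by simp
    have "v = 0" using null_zero[OF vv vP] g unfolding P_def geod_line_def by simp
    then show ?thesis unfolding v_def C_def S_def by (simp add: algebra_simps)
  qed
  show ?thesis using UU PU rep unfolding P_def by blast
qed

lemma det_rep:
  assumes "\<And>t. c t = cosh (t - a) *\<^sub>R P + sinh (t - a) *\<^sub>R U"
  shows "det3 (c 0) (c 1) z = sinh 1 * det3 P U z"
proof -
  have k: "cosh (0 - a) * sinh (1 - a) - sinh (0 - a) * cosh (1 - a) = sinh 1"
    using sinh_diff[of "1 - a" "0 - a"] by (simp add: algebra_simps)
  have "det3 (c 0) (c 1) z = (cosh (0 - a) * sinh (1 - a) - sinh (0 - a) * cosh (1 - a)) * det3 P U z"
    unfolding assms det3_def by (simp add: algebra_simps)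
  then show ?thesis using k by simp
qed


lemma step:
  assumes g0: "geod_line c0" and g1: "geod_line c1" and ge: "geod_line e"
    and m0: "meets_orth c0 a0 e" and m1: "meets_orth c1 b0 e"
    and L0: "\<forall>z\<in>range c1. left_of c0 z" and R1: "\<forall>z\<in>range c0. right_of c1 z"
    and x0: "x0 = c0 (a0 + s)" and x1: "x1 = c1 (b0 + s)"
    and hy: "hyp_pt y" and dy: "det3 (c1 0) (c1 1) y \<ge> 0"
  shows "mink x0 y \<le> mink x1 y"
proof -
  define P where "P = c0 a0"
  define Q where "Q = c1 b0"
  obtain U where UU: "mink U U = 1" and PU: "mink P U = 0"
    and r0: "\<And>t. c0 t = cosh (t - a0) *\<^sub>R P + sinh (t - a0) *\<^sub>R U"
    using geod_rep[OF g0, of a0] unfolding P_def by blast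
  obtain V where VV: "mink V V = 1" and QV: "mink Q V = 0"
    and r1: "\<And>t. c1 t = cosh (t - b0) *\<^sub>R Q + sinh (t - b0) *\<^sub>R V"
    using geod_rep[OF g1, of b0] unfolding Q_def by blast
  have dU: "vector_derivative c0 (at a0) = U" using rep_deriv[OF r0, of a0] by simp
  have dV: "vector_derivative c1 (at b0) = V" using rep_deriv[OF r1, of b0] by simp
  obtain t0 where t0: "e t0 = P" "mink U (vector_derivative e (at t0)) = 0"
    using m0 dU unfolding meets_orth_def P_def by auto
  obtain t1 where t1: "e t1 = Q" "mink V (vector_derivative e (at t1)) = 0"
    using m1 dV unfolding meets_orth_def Q_def by auto
  obtain W where WW: "mink W W = 1" and PW: "mink P W = 0"
    and re: "\<And>t. e t = cosh (t - t0) *\<^sub>R P + sinh (t - t0) *\<^sub>R W"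
    using geod_rep[OF ge, of t0] t0(1) by auto
  have dW0: "vector_derivative e (at t0) = W" using rep_deriv[OF re, of t0] by simp
  define L where "L = t1 - t0"
  define C where "C = cosh L"
  define S where "S = sinh L"
  have CS: "C^2 = S^2 + 1" unfolding C_def S_def by (rule cosh_square_eq)
  have C1: "C \<ge> 1" unfolding C_def by (rule cosh_real_ge_1)
  have dW1: "vector_derivative e (at t1) = S *\<^sub>R P + C *\<^sub>R W"
    using rep_deriv[OF re, of t1] unfolding S_def C_def L_def .
  have Qe: "Q = C *\<^sub>R P + S *\<^sub>R W" using re[of t1] t1(1) unfolding C_def S_def L_def by simp
  have PP: "mink P P = -1" using g0 unfolding P_def geod_line_def hyp_pt_def by simp
  have UW: "mink U W = 0" using t0(2) dW0 by simp
  have UP: "mink U P = 0" "mink W P = 0" "mink W U = 0" using PU PW UW by (simp_all add: mink_sym)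
  have QP: "mink Q P = - C" "mink Q U = 0" "mink Q W = S"
    unfolding Qe by (simp_all add: mink_lin PP UP PW PU WW UW)
  have V1: "S * mink V P + C * mink V W = 0" using t1(2) dW1 by (simp add: mink_lin)
  have V2: "C * mink V P + S * mink V W = 0" using QV unfolding Qe by (simp add: mink_lin mink_sym)
  have VPW: "mink V P = 0 \<and> mink V W = 0"
  proof -
    have "(C^2 - S^2) * mink V P = C * (C * mink V P + S * mink V W) - S * (S * mink V P + C * mink V W)"
      by (simp add: power2_eq_square algebra_simps)
    then have "(C^2 - S^2) * mink V P = 0" using V1 V2 by simp
    then have a: "mink V P = 0" using CS by simp
    then have "C * mink V W = 0" using V1 by simp
    then show ?thesis using a C1 by simp
  qed
  define \<sigma> where "\<sigma> = det3 P U W"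
  have sig: "\<sigma> * \<sigma> = 1"
    using gram[of P U W P U W] unfolding \<sigma>_def by (simp add: PP UU WW UP PU PW UW)
  have sh1: "sinh (1::real) > 0" by simp
  have dPUQ: "det3 P U Q > 0"
  proof -
    have "Q \<in> range c1" unfolding Q_def by simp
    then have "det3 (c0 0) (c0 1) Q > 0" using L0 unfolding left_of_def by blast
    then show ?thesis unfolding det_rep[OF r0] using sh1 by (simp add: zero_less_mult_iff)
  qed
  have g1: "det3 P U Q * \<sigma> = S"
    using gram[of P U Q P U W] unfolding \<sigma>_def by (simp add: PP UU WW UP PU PW UW QP)
  have Ssig: "S * \<sigma> > 0"
  proof -
    have "S * \<sigma> = det3 P U Q * (\<sigma> * \<sigma>)" using g1 by (simp add: algebra_simps)
    then show ?thesis using sig dPUQ by simp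
  qed
  have dQVP: "det3 Q V P < 0"
  proof -
    have "P \<in> range c0" unfolding P_def by simp
    then have "det3 (c1 0) (c1 1) P < 0" using R1 unfolding right_of_def by blast
    then show ?thesis unfolding det_rep[OF r1] using sh1 by (simp add: mult_less_0_iff)
  qed
  have VU': "mink V U = mink U V" by (simp add: mink_sym)
  have g2: "det3 Q V P * \<sigma> = - mink V U * S"
    using gram[of Q V P P U W] VPW unfolding \<sigma>_def by (simp add: PP UU WW UP PU PW UW QP)
  have kpos: "mink V U > 0"
  proof -
    have "det3 Q V P = - mink V U * (S * \<sigma>)"
    proof -
      have "det3 Q V P = det3 Q V P * (\<sigma> * \<sigma>)" using sig by simp
      also have "\<dots> = (det3 Q V P * \<sigma>) * \<sigma>" by (simp add: mult.assoc)
      also have "\<dots> = - mink V U * (S * \<sigma>)" unfolding g2 by (simp add: algebra_simps)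
      finally show ?thesis .
    qed
    then have "0 < mink V U * (S * \<sigma>)" using dQVP by simp
    then show ?thesis using Ssig by (rule zero_less_mult_pos2)
  qed
  have VPs: "mink P V = 0" "mink W V = 0" "mink U V = mink V U" using VPW by (simp_all add: mink_sym)
  have g3: "det3 P W V * \<sigma> = - mink V U"
    using gram[of P W V P U W] VPW VPs unfolding \<sigma>_def by (simp add: PP UU WW UP PU PW UW)
  have g4: "det3 P W V * det3 P W V = 1"
    using gram[of P W V P W V] VPW VPs by (simp add: PP UU WW UP PU PW UW VV)
  have k1: "mink V U = 1"
  proof -
    have "mink V U * mink V U = (det3 P W V * \<sigma>) * (det3 P W V * \<sigma>)"
      unfolding g3 by simp
    also have "\<dots> = (det3 P W V * det3 P W V) * (\<sigma> * \<sigma>)" by (simp add: algebra_simps)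
    finally have kk: "mink V U * mink V U = 1" using g4 sig by simp
    have "(mink V U - 1) * (mink V U + 1) = mink V U * mink V U - 1" by (simp add: algebra_simps)
    then have "(mink V U - 1) * (mink V U + 1) = 0" using kk by simp
    then show ?thesis using kpos by simp
  qed
  have VU: "V = U"
  proof -
    have "mink (V - U) (V - U) = 0" using k1 VV UU VPs by (simp add: mink_lin)
    moreover have "mink (V - U) P = 0" using VPW UP by (simp add: mink_lin)
    moreover have "hyp_pt P" using g0 unfolding P_def geod_line_def by simp
    ultimately have "V - U = 0" by (rule null_zero)
    then show ?thesis by simp
  qed
  have x0e: "x0 = cosh s *\<^sub>R P + sinh s *\<^sub>R U" using x0 r0 by simp
  have x1e: "x1 = cosh s *\<^sub>R Q + sinh s *\<^sub>R U" using x1 r1 VU by simp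
  define \<alpha> where "\<alpha> = - mink P y"
  define \<gamma> where "\<gamma> = mink W y"
  have al: "\<alpha> \<ge> 1" using hyp_ge[OF _ hy, of P] g0 unfolding \<alpha>_def P_def geod_line_def by fastforce
  have dQUy: "det3 Q U y \<ge> 0"
    using dy unfolding det_rep[OF r1] VU using sh1 by (simp add: zero_le_mult_iff)
  have g5: "det3 Q U y * \<sigma> = C * \<gamma> - S * \<alpha>"
    using gram[of Q U y P U W] unfolding \<sigma>_def \<alpha>_def \<gamma>_def
    by (simp add: PP UU WW UP PU PW UW QP mink_sym[of y] algebra_simps)
  have key: "S * (C * \<gamma> - S * \<alpha>) \<ge> 0"
  proof -
    have "S * (C * \<gamma> - S * \<alpha>) = (S * \<sigma>) * det3 Q U y"
      unfolding g5[symmetric] by (simp add: algebra_simps)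
    moreover have "(S * \<sigma>) * det3 Q U y \<ge> 0" using Ssig dQUy by simp
    ultimately show ?thesis by linarith
  qed
  have goal: "S * \<gamma> - \<alpha> * (C - 1) \<ge> 0"
  proof -
    have "C * (S * \<gamma>) \<ge> \<alpha> * (C^2 - 1)" using key CS by (simp add: algebra_simps power2_eq_square)
    moreover have "\<alpha> * (C^2 - 1) = C * (\<alpha> * (C - 1)) + \<alpha> * (C - 1)"
      by (simp add: algebra_simps power2_eq_square)
    moreover have "\<alpha> * (C - 1) \<ge> 0" using al C1 by simp
    ultimately have "C * (S * \<gamma>) \<ge> C * (\<alpha> * (C - 1))" by linarith
    then show ?thesis using C1 by (simp add: mult_le_cancel_left)
  qed
  have "mink x1 y - mink x0 y = cosh s * (mink Q y - mink P y)"
    unfolding x0e x1e by (simp add: mink_lin algebra_simps)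
  also have "mink Q y = - C * \<alpha> + S * \<gamma>" unfolding Qe \<alpha>_def \<gamma>_def by (simp add: mink_lin)
  finally have "mink x1 y - mink x0 y = cosh s * (S * \<gamma> - \<alpha> * (C - 1))"
    unfolding \<alpha>_def by (simp add: algebra_simps)
  moreover have "cosh s > 0" by (rule cosh_real_pos)
  moreover have "cosh s * (S * \<gamma> - \<alpha> * (C - 1)) \<ge> 0"
    using goal \<open>cosh s > 0\<close> by simp
  ultimately show ?thesis by linarith
qed


lemma det_on:
  assumes g: "geod_line c" shows "det3 (c 0) (c 1) (c t) = 0"
proof -
  obtain U where r: "\<And>t. c t = cosh (t - 0) *\<^sub>R c 0 + sinh (t - 0) *\<^sub>R U"
    using geod_rep[OF g, of 0] by blast
  have "det3 (c 0) U (c t) = 0" unfolding r[of t] det3_def by (simp add: algebra_simps)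
  then show ?thesis using det_rep[OF r] by simp
qed

theorem lemmaA11:
  fixes n :: nat
    and c :: "nat \<Rightarrow> real \<Rightarrow> real^3"
    and e :: "nat \<Rightarrow> real \<Rightarrow> real^3"
    and a b :: "nat \<Rightarrow> real"
    and x :: "nat \<Rightarrow> real^3"
  assumes geod: "\<And>i. i \<le> n \<Longrightarrow> geod_line (c i)"
    and disj: "\<And>i j. i \<le> n \<Longrightarrow> j \<le> n \<Longrightarrow> i \<noteq> j \<Longrightarrow> range (c i) \<inter> range (c j) = {}"
    and sep: "\<And>k i j. k < i \<Longrightarrow> i < j \<Longrightarrow> j \<le> n \<Longrightarrow>
                 separates (range (c i)) (range (c k)) (range (c j))"
    and orient: "\<And>i j. i < j \<Longrightarrow> j \<le> n \<Longrightarrow>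
                 (\<forall>z \<in> range (c j). left_of (c i) z) \<and> (\<forall>z \<in> range (c i). right_of (c j) z)"
    and perp: "\<And>i. i < n \<Longrightarrow> geod_line (e i) \<and> meets_orth (c i) (a i) (e i)
                                  \<and> meets_orth (c (Suc i)) (b i) (e i)"
    and on_geod: "\<And>i. i \<le> n \<Longrightarrow> x i \<in> range (c i)"
    and homol: "\<And>i. i < n \<Longrightarrow> \<exists>s. x i = c i (a i + s) \<and> x (Suc i) = c (Suc i) (b i + s)"
  shows "\<forall>y \<in> range (c n). hdist (x n) y \<le> hdist (x 0) y"
proof
  fix y assume y: "y \<in> range (c n)"
  have hy: "hyp_pt y" using y geod[of n] unfolding geod_line_def by auto
  have hx: "hyp_pt (x i)" if "i \<le> n" for i
    using on_geod[OF that] geod[OF that] unfolding geod_line_def by auto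
  have chain: "k \<le> n \<Longrightarrow> mink (x 0) y \<le> mink (x k) y" for k
  proof (induction k)
    case 0 then show ?case by simp
  next
    case (Suc k)
    then have kn: "k < n" by simp
    obtain s where s: "x k = c k (a k + s)" "x (Suc k) = c (Suc k) (b k + s)"
      using homol[OF kn] by blast
    have dy: "det3 (c (Suc k) 0) (c (Suc k) 1) y \<ge> 0"
    proof (cases "Suc k = n")
      case True
      then obtain t where "y = c (Suc k) t" using y by auto
      then show ?thesis using det_on[OF geod[of "Suc k"]] True by simp
    next
      case False
      then have "Suc k < n" using Suc.prems by simp
      then have "left_of (c (Suc k)) y" using orient[of "Suc k" n] y by blast
      then show ?thesis unfolding left_of_def by simp
    qed
    have o: "(\<forall>z \<in> range (c (Suc k)). left_of (c k) z) \<and> (\<forall>z \<in> range (c k). right_of (c (Suc k)) z)"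
      using orient[of k "Suc k"] Suc.prems by simp
    have "mink (x k) y \<le> mink (x (Suc k)) y"
    proof (rule step)
      show "geod_line (c k)" "geod_line (c (Suc k))" using geod kn by auto
      show "geod_line (e k)" "meets_orth (c k) (a k) (e k)" "meets_orth (c (Suc k)) (b k) (e k)"
        using perp[OF kn] by auto
      show "\<forall>z\<in>range (c (Suc k)). left_of (c k) z" "\<forall>z\<in>range (c k). right_of (c (Suc k)) z"
        using o by auto
    qed (fact s(1), fact s(2), fact hy, fact dy)
    then show ?case using Suc by simp
  qed
  have le: "- mink (x n) y \<le> - mink (x 0) y" using chain[of n] by simp
  have g1: "- mink (x n) y \<ge> 1" "- mink (x 0) y \<ge> 1"
    using hyp_ge[OF hx[of n] hy] hyp_ge[OF hx[of 0] hy] by simp_all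
  have "\<not> arcosh (- mink (x 0) y) < arcosh (- mink (x n) y)"
    using arcosh_less_iff_real[OF g1(2) g1(1)] le by simp
  then show "hdist (x n) y \<le> hdist (x 0) y" unfolding hdist_def by simp
qed

end
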